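(* Let $n,m\ge 3$ and let $G=P_n\square P_m$ be the grid graph. Every minimal resolving set of $G$ contains two boundary vertices lying on opposite sides of the grid.
   Context: The grid graph $P_n\square P_m$ has vertex set $\{(i,j):0\le i\le n-1,\ 0\le j\le m-1\}$, with $(i,j)$ adjacent to $(k,l)$ iff $|i-k|+|j-l|=1$; distance $d((i,j),(k,l))=|i-k|+|j-l|$. A vertex $w$ resolves $u,v$ if $d(w,u)\ne d(w,v)$; a set $R$ is resolving if every pair of distinct vertices is resolved by some vertex of $R$; a minimal resolving set is a resolving set $R$ such that no $R\setminus\{x\}$, $x\in R$, is resolving. Boundary vertices are the vertices of degree 2 or 3. The sides of the grid are the four lines with first coordinate $0$, first coordinate $n-1$, second coordinate $0$, second coordinate $m-1$; two sides are opposite if they share no vertex. Two boundary vertices lie on opposite sides if one lies on a side and the other on the opposite side. *)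

theory Defs
  imports Main
begin

type_synonym vertex = "nat \<times> nat"

definition grid_vertices :: "nat \<Rightarrow> nat \<Rightarrow> vertex set" where
  "grid_vertices n m = {(i, j). i < n \<and> j < m}"

definition grid_dist :: "vertex \<Rightarrow> vertex \<Rightarrow> nat" where
  "grid_dist u v = nat \<bar>int (fst u) - int (fst v)\<bar> + nat \<bar>int (snd u) - int (snd v)\<bar>"

definition grid_adj :: "nat \<Rightarrow> nat \<Rightarrow> vertex \<Rightarrow> vertex \<Rightarrow> bool" where
  "grid_adj n m u v \<longleftrightarrow> u \<in> grid_vertices n m \<and> v \<in> grid_vertices n m \<and> grid_dist u v = 1"

definition grid_degree :: "nat \<Rightarrow> nat \<Rightarrow> vertex \<Rightarrow> nat" where
  "grid_degree n m v = card {u. grid_adj n m v u}"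

definition boundary_vertex :: "nat \<Rightarrow> nat \<Rightarrow> vertex \<Rightarrow> bool" where
  "boundary_vertex n m v \<longleftrightarrow> v \<in> grid_vertices n m \<and> grid_degree n m v \<in> {2, 3}"

definition resolves :: "vertex \<Rightarrow> vertex \<Rightarrow> vertex \<Rightarrow> bool" where
  "resolves w u v \<longleftrightarrow> grid_dist w u \<noteq> grid_dist w v"

definition resolving_set :: "nat \<Rightarrow> nat \<Rightarrow> vertex set \<Rightarrow> bool" where
  "resolving_set n m R \<longleftrightarrow> R \<subseteq> grid_vertices n m \<and>
     (\<forall>u\<in>grid_vertices n m. \<forall>v\<in>grid_vertices n m. u \<noteq> v \<longrightarrow> (\<exists>w\<in>R. resolves w u v))"

definition minimal_resolving_set :: "nat \<Rightarrow> nat \<Rightarrow> vertex set \<Rightarrow> bool" where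
  "minimal_resolving_set n m R \<longleftrightarrow> resolving_set n m R \<and>
     (\<forall>x\<in>R. \<not> resolving_set n m (R - {x}))"

definition on_opposite_sides :: "nat \<Rightarrow> nat \<Rightarrow> vertex \<Rightarrow> vertex \<Rightarrow> bool" where
  "on_opposite_sides n m u v \<longleftrightarrow>
     (fst u = 0 \<and> fst v = n - 1) \<or> (fst u = n - 1 \<and> fst v = 0) \<or>
     (snd u = 0 \<and> snd v = m - 1) \<or> (snd u = m - 1 \<and> snd v = 0)"

end

theory Submission
  imports Defs
begin

lemma adj_char:
  "grid_adj n m (i,j) (k,l) \<longleftrightarrow> i<n \<and> j<m \<and> k<n \<and> l<m \<and>
     ((k=i \<and> (l=j+1 \<or> j=l+1)) \<or> (l=j \<and> (k=i+1 \<or> i=k+1)))"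
  unfolding grid_adj_def grid_vertices_def grid_dist_def by auto

lemma deg_bounds:
  assumes sub: "{u. grid_adj n m v u} \<subseteq> {a,b,c}"
    and ab: "grid_adj n m v a" "grid_adj n m v b" "a \<noteq> b"
  shows "grid_degree n m v \<in> {2,3}"
proof -
  have fin: "finite {u. grid_adj n m v u}" using sub finite_subset by blast
  have "card {u. grid_adj n m v u} \<le> card {a,b,c}" using card_mono[OF _ sub] by simp
  also have "\<dots> \<le> 3" by (simp add: card_insert_le_m1)
  finally have le: "card {u. grid_adj n m v u} \<le> 3" .
  have "{a,b} \<subseteq> {u. grid_adj n m v u}" using ab by auto
  then have "card {a,b} \<le> card {u. grid_adj n m v u}" using card_mono[OF fin] by blast
  with ab have "2 \<le> card {u. grid_adj n m v u}" by simp
  with le show ?thesis unfolding grid_degree_def by auto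
qed

lemma bd:
  assumes "n \<ge> 3" "m \<ge> 3" "v \<in> grid_vertices n m"
    and "fst v = 0 \<or> fst v = n - 1 \<or> snd v = 0 \<or> snd v = m - 1"
  shows "boundary_vertex n m v"
proof -
  obtain i j where v: "v = (i,j)" by force
  have ij: "i < n" "j < m" using assms(3) v unfolding grid_vertices_def by auto
  define j' where "j' = (if j = 0 then 1 else j - 1)"
  define i' where "i' = (if i = 0 then 1 else i - 1)"
  have j': "grid_adj n m (i,j) (i,j')" using ij assms(1,2) unfolding adj_char j'_def by auto
  have i': "grid_adj n m (i,j) (i',j)" using ij assms(1,2) unfolding adj_char i'_def by auto
  have "grid_degree n m (i,j) \<in> {2,3}"
    using assms(4) unfolding v fst_conv snd_conv
  proof (elim disjE)
    assume h: "i = 0"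
    show ?thesis
      by (rule deg_bounds[where a="(1,j)" and b="(i,j')" and c="(0, if j = 0 then 1 else j + 1)"])
        (use h ij assms(1,2) j' in \<open>auto simp: adj_char j'_def\<close>)
  next
    assume h: "i = n - 1"
    show ?thesis
      by (rule deg_bounds[where a="(n-2,j)" and b="(i,j')" and c="(i, if j = 0 then 1 else j + 1)"])
        (use h ij assms(1,2) j' in \<open>auto simp: adj_char j'_def\<close>)
  next
    assume h: "j = 0"
    show ?thesis
      by (rule deg_bounds[where a="(i,1)" and b="(i',j)" and c="(if i = 0 then 1 else i + 1, j)"])
        (use h ij assms(1,2) i' in \<open>auto simp: adj_char i'_def\<close>)
  next
    assume h: "j = m - 1"
    show ?thesis
      by (rule deg_bounds[where a="(i,m-2)" and b="(i',j)" and c="(if i = 0 then 1 else i + 1, j)"])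
        (use h ij assms(1,2) i' in \<open>auto simp: adj_char i'_def\<close>)
  qed
  then show ?thesis using assms(3) v unfolding boundary_vertex_def by simp
qed

theorem proposition2:
  fixes n m :: nat and R :: "vertex set"
  assumes "n \<ge> 3" and "m \<ge> 3"
    and "minimal_resolving_set n m R"
  shows "\<exists>u\<in>R. \<exists>v\<in>R. boundary_vertex n m u \<and> boundary_vertex n m v \<and>
           on_opposite_sides n m u v"
proof -
  have res: "resolving_set n m R" using assms(3) minimal_resolving_set_def by blast
  have Rg: "R \<subseteq> grid_vertices n m" using res resolving_set_def by blast
  have get: "\<exists>w\<in>R. grid_dist w u \<noteq> grid_dist w v"
    if "u \<in> grid_vertices n m" "v \<in> grid_vertices n m" "u \<noteq> v" for u v
    using res that unfolding resolving_set_def resolves_def by blast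
  have g: "(a,b) \<in> grid_vertices n m \<longleftrightarrow> a < n \<and> b < m" for a b
    by (simp add: grid_vertices_def)
  obtain w1 where w1: "w1 \<in> R" "grid_dist w1 (0,1) \<noteq> grid_dist w1 (1,0)"
    using get[of "(0,1)" "(1,0)"] assms(1,2) g by auto
  obtain w2 where w2: "w2 \<in> R" "grid_dist w2 (n-2,0) \<noteq> grid_dist w2 (n-1,1)"
    using get[of "(n-2,0)" "(n-1,1)"] assms(1,2) g by auto
  obtain w3 where w3: "w3 \<in> R" "grid_dist w3 (0,m-2) \<noteq> grid_dist w3 (1,m-1)"
    using get[of "(0,m-2)" "(1,m-1)"] assms(1,2) g by auto
  obtain w4 where w4: "w4 \<in> R" "grid_dist w4 (n-2,m-1) \<noteq> grid_dist w4 (n-1,m-2)"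
    proof -
    have "n - 2 \<noteq> n - 1" using assms(1) by simp
    then show ?thesis using that get[of "(n-2,m-1)" "(n-1,m-2)"] assms(1,2) g by auto
  qed
  have ing: "fst w < n \<and> snd w < m" if "w \<in> R" for w
    using Rg that unfolding grid_vertices_def by auto
  have c1: "fst w1 = 0 \<or> snd w1 = 0"
    using w1(2) ing[OF w1(1)] unfolding grid_dist_def by (cases w1) auto
  have c2: "snd w2 = 0 \<or> fst w2 = n - 1"
    using w2(2) ing[OF w2(1)] assms(1,2) unfolding grid_dist_def by (cases w2) auto
  have c3: "fst w3 = 0 \<or> snd w3 = m - 1"
    using w3(2) ing[OF w3(1)] assms(1,2) unfolding grid_dist_def by (cases w3) auto
  have c4: "fst w4 = n - 1 \<or> snd w4 = m - 1"
    using w4(2) ing[OF w4(1)] assms(1,2) unfolding grid_dist_def by (cases w4) auto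
  have B: "boundary_vertex n m w" if "w \<in> R" "fst w = 0 \<or> fst w = n - 1 \<or> snd w = 0 \<or> snd w = m - 1" for w
    using bd[OF assms(1,2)] Rg that by blast
  show ?thesis
    using c1 c2 c3 c4 w1(1) w2(1) w3(1) w4(1) B
    unfolding on_opposite_sides_def by metis
qed

end
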